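(* Let $\Phi$ satisfy the Standing Assumption and suppose moreover that the Lévy measure $\nu_\Phi$ is absolutely continuous with respect to Lebesgue measure. Let $X$ be a Banach space, $F:X\to X$ a bounded linear operator, $\xi,f_0\in X$. If the problem $\partial_t^\Phi f(t)=\xi+Ff(t)$ for $t>0$, $f(0)=f_0$, admits a solution $f\in C([0,+\infty),X)$, then this solution is unique among solutions in $C([0,+\infty),X)$.
   Context: Standing Assumption: $\Phi$ is a special Bernstein function (both $\Phi$ and $\lambda/\Phi(\lambda)$ are Bernstein functions) with Lévy–Khintchine representation $\Phi(\lambda)=\int_0^\infty(1-e^{-\lambda x})\nu_\Phi(dx)$ (i.e. $a_\Phi=b_\Phi=0$) and $\nu_\Phi(0,\infty)=\infty$; the potential measure of its subordinator has a non-increasing density $u_\Phi$ with $u_\Phi(t)\le Ct^{\beta-1}$ on $(0,t_0)$ for some $t_0,C>0,\beta\in(0,1)$. $\bar\nu_\Phi(t)=\nu_\Phi((t,\infty))$. Generalized Caputo derivative: $\partial_t^\Phi f(t)=\frac{d}{dt}\int_0^t\bar\nu_\Phi(t-s)(f(s)-f(0))ds$. *)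

theory Defs
  imports "HOL-Probability.Probability"
begin

definition bernstein :: "(real \<Rightarrow> real) \<Rightarrow> bool" where
  "bernstein g \<longleftrightarrow>
     (\<forall>x>0. g x \<ge> 0) \<and>
     (\<forall>n. \<forall>x>0. ((deriv ^^ n) g has_real_derivative (deriv ^^ Suc n) g x) (at x)) \<and>
     (\<forall>n\<ge>1. \<forall>x>0. (-1) ^ (n - 1) * (deriv ^^ n) g x \<ge> 0)"

definition nu_bar :: "real measure \<Rightarrow> real \<Rightarrow> real" where
  "nu_bar \<nu> t = measure \<nu> {t<..}"

text \<open>Standing assumption: Phi(l) = int (1 - e^(-l x)) nu(dx) with nu a Levy measure on (0,oo),
  nu(0,oo) = oo, Phi special Bernstein, and the potential measure of the subordinator
  (characterized by its Laplace transform 1/Phi) has a non-increasing density u with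
  u(t) \<le> C t^(beta-1) near 0.\<close>
definition standing_assumption :: "(real \<Rightarrow> real) \<Rightarrow> real measure \<Rightarrow> (real \<Rightarrow> real) \<Rightarrow> bool" where
  "standing_assumption \<Phi> \<nu> u \<longleftrightarrow>
     sets \<nu> = sets borel \<and>
     emeasure \<nu> {..0} = 0 \<and>
     (\<integral>\<^sup>+ x. ennreal (min 1 x) \<partial>\<nu>) < \<infinity> \<and>
     emeasure \<nu> {0<..} = \<infinity> \<and>
     (\<forall>l>0. ennreal (\<Phi> l) = (\<integral>\<^sup>+ x. ennreal (1 - exp (- l * x)) \<partial>\<nu>)) \<and>
     bernstein \<Phi> \<and>
     bernstein (\<lambda>l. l / \<Phi> l) \<and>
     (\<forall>t>0. u t \<ge> 0) \<and>
     (\<forall>s t. 0 < s \<longrightarrow> s \<le> t \<longrightarrow> u t \<le> u s) \<and>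
     (\<forall>l>0. (\<integral>\<^sup>+ t\<in>{0<..}. ennreal (exp (- l * t) * u t) \<partial>lborel) = ennreal (1 / \<Phi> l)) \<and>
     (\<exists>t0 C \<beta>. t0 > 0 \<and> C > 0 \<and> 0 < \<beta> \<and> \<beta> < 1 \<and>
        (\<forall>t. 0 < t \<and> t < t0 \<longrightarrow> u t \<le> C * t powr (\<beta> - 1)))"

text \<open>Solution in C([0,oo),X) of  d^Phi_t f(t) = xi + F f(t) (t > 0), f(0) = f0, where
  d^Phi_t f(t) = d/dt int_0^t nu_bar(t-s) (f(s) - f(0)) ds.\<close>
definition caputo_solution ::
  "real measure \<Rightarrow> ('a::banach \<Rightarrow> 'a) \<Rightarrow> 'a \<Rightarrow> 'a \<Rightarrow> (real \<Rightarrow> 'a) \<Rightarrow> bool" where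
  "caputo_solution \<nu> F \<xi> f0 f \<longleftrightarrow>
     continuous_on {0..} f \<and> f 0 = f0 \<and>
     (\<forall>t>0. ((\<lambda>\<tau>. integral {0..\<tau>} (\<lambda>s. nu_bar \<nu> (\<tau> - s) *\<^sub>R (f s - f 0)))
               has_vector_derivative (\<xi> + F (f t))) (at t))"

end

theory Submission
  imports Defs
begin


lemma WUL:
  fixes f :: "real \<Rightarrow> 'a::banach" and w :: "real \<Rightarrow> real"
  assumes w: "w integrable_on {a..b}" and wpos: "\<And>x. x \<in> {a..b} \<Longrightarrow> 0 \<le> w x"
    and approx: "\<And>e. e > 0 \<Longrightarrow> \<exists>\<psi>. \<psi> integrable_on {a..b} \<and> (\<forall>x\<in>{a..b}. norm (f x - \<psi> x) \<le> e * w x)"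
  shows "f integrable_on {a..b}"
proof -
  define W where "W = integral {a..b} w"
  have W0: "0 \<le> W" unfolding W_def using w wpos using Henstock_Kurzweil_Integration.integral_nonneg by blast
  have "\<forall>\<epsilon>>0. \<exists>\<gamma>. gauge \<gamma> \<and>
          (\<forall>\<D>1 \<D>2. \<D>1 tagged_division_of (cbox a b) \<and> \<gamma> fine \<D>1 \<and>
            \<D>2 tagged_division_of (cbox a b) \<and> \<gamma> fine \<D>2 \<longrightarrow>
            norm ((\<Sum>(x,K)\<in>\<D>1. Henstock_Kurzweil_Integration.content K *\<^sub>R f x) - (\<Sum>(x,K)\<in>\<D>2. Henstock_Kurzweil_Integration.content K *\<^sub>R f x)) < \<epsilon>)"
  proof (intro allI impI)
    fix \<epsilon> :: real assume \<epsilon>: "\<epsilon> > 0"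
    define e where "e = \<epsilon> / (4 * (W + 1))"
    have e: "e > 0" unfolding e_def using \<epsilon> W0 by simp
    obtain \<psi> where \<psi>int: "\<psi> integrable_on {a..b}" and \<psi>: "\<And>x. x\<in>{a..b} \<Longrightarrow> norm (f x - \<psi> x) \<le> e * w x"
      using approx[OF e] by blast
    obtain \<gamma>1 where g1: "gauge \<gamma>1" and g1c: "\<And>\<D>1 \<D>2. \<D>1 tagged_division_of (cbox a b) \<Longrightarrow> \<gamma>1 fine \<D>1 \<Longrightarrow>
            \<D>2 tagged_division_of (cbox a b) \<Longrightarrow> \<gamma>1 fine \<D>2 \<Longrightarrow>
            norm ((\<Sum>(x,K)\<in>\<D>1. Henstock_Kurzweil_Integration.content K *\<^sub>R \<psi> x) - (\<Sum>(x,K)\<in>\<D>2. Henstock_Kurzweil_Integration.content K *\<^sub>R \<psi> x)) < \<epsilon>/2"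
    proof -
      have C: "\<psi> integrable_on cbox a b" using \<psi>int by (simp add: cbox_interval)
      have "\<epsilon>/2 > 0" using \<epsilon> by simp
      from C[unfolded integrable_Cauchy, rule_format, OF this] obtain \<gamma> where G: "gauge \<gamma>" and P:
        "\<forall>\<D>1 \<D>2. \<D>1 tagged_division_of cbox a b \<and> \<gamma> fine \<D>1 \<and> \<D>2 tagged_division_of cbox a b \<and> \<gamma> fine \<D>2 \<longrightarrow>
          norm ((\<Sum>(x,K)\<in>\<D>1. Henstock_Kurzweil_Integration.content K *\<^sub>R \<psi> x) - (\<Sum>(x,K)\<in>\<D>2. Henstock_Kurzweil_Integration.content K *\<^sub>R \<psi> x)) < \<epsilon>/2" by blast
      show ?thesis
      proof (rule that[OF G])
        fix \<D>1 \<D>2 assume "\<D>1 tagged_division_of (cbox a b)" "\<gamma> fine \<D>1" "\<D>2 tagged_division_of (cbox a b)" "\<gamma> fine \<D>2"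
        then show "norm ((\<Sum>(x,K)\<in>\<D>1. Henstock_Kurzweil_Integration.content K *\<^sub>R \<psi> x) - (\<Sum>(x,K)\<in>\<D>2. Henstock_Kurzweil_Integration.content K *\<^sub>R \<psi> x)) < \<epsilon>/2"
          using P by simp
      qed
    qed
    have "(w has_integral W) (cbox a b)" using w unfolding W_def by (simp add: integrable_integral)
    then obtain \<gamma>2 where g2: "gauge \<gamma>2" and g2c: "\<And>\<D>. \<D> tagged_division_of (cbox a b) \<Longrightarrow> \<gamma>2 fine \<D> \<Longrightarrow>
            norm ((\<Sum>(x,K)\<in>\<D>. Henstock_Kurzweil_Integration.content K *\<^sub>R w x) - W) < 1"
    proof -
      assume H: "(w has_integral W) (cbox a b)"
      from H[unfolded has_integral, rule_format, OF zero_less_one] obtain \<gamma> where G: "gauge \<gamma>" and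
        P: "\<forall>\<D>. \<D> tagged_division_of cbox a b \<and> \<gamma> fine \<D> \<longrightarrow> norm ((\<Sum>(x,K)\<in>\<D>. Henstock_Kurzweil_Integration.content K *\<^sub>R w x) - W) < 1"
        by blast
      show ?thesis
      proof (rule that[OF G])
        fix \<D> assume "\<D> tagged_division_of (cbox a b)" "\<gamma> fine \<D>"
        then show "norm ((\<Sum>(x,K)\<in>\<D>. Henstock_Kurzweil_Integration.content K *\<^sub>R w x) - W) < 1" using P by simp
      qed
    qed
    have key: "norm (\<Sum>(x,K)\<in>\<D>. Henstock_Kurzweil_Integration.content K *\<^sub>R (f x - \<psi> x)) \<le> e * (W + 1)"
      if D: "\<D> tagged_division_of (cbox a b)" "\<gamma>2 fine \<D>" for \<D>
    proof -
      have fin: "finite \<D>" using D tagged_division_ofD(1) by blast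
      have "norm (\<Sum>(x,K)\<in>\<D>. Henstock_Kurzweil_Integration.content K *\<^sub>R (f x - \<psi> x)) \<le> (\<Sum>(x,K)\<in>\<D>. norm (Henstock_Kurzweil_Integration.content K *\<^sub>R (f x - \<psi> x)))"
        using norm_sum[of "\<lambda>(x,K). Henstock_Kurzweil_Integration.content K *\<^sub>R (f x - \<psi> x)" \<D>] by (simp add: split_def)
      also have "\<dots> \<le> (\<Sum>(x,K)\<in>\<D>. e * (Henstock_Kurzweil_Integration.content K *\<^sub>R w x))"
      proof (rule sum_mono)
        fix p assume p: "p \<in> \<D>"
        obtain x K where pxk: "p = (x,K)" by fastforce
        have xK: "x \<in> {a..b}" using tagged_division_ofD(2,3)[OF D(1), of x K] p pxk by (auto simp: cbox_interval)
        have "norm (Henstock_Kurzweil_Integration.content K *\<^sub>R (f x - \<psi> x)) = Henstock_Kurzweil_Integration.content K * norm (f x - \<psi> x)" by simp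
        also have "\<dots> \<le> Henstock_Kurzweil_Integration.content K * (e * w x)" using \<psi>[OF xK] by (simp add: mult_left_mono)
        finally show "(case p of (x,K) \<Rightarrow> norm (Henstock_Kurzweil_Integration.content K *\<^sub>R (f x - \<psi> x))) \<le> (case p of (x, K) \<Rightarrow> e * (Henstock_Kurzweil_Integration.content K *\<^sub>R w x))"
          by (simp add: pxk algebra_simps)
      qed
      also have "\<dots> = e * (\<Sum>(x,K)\<in>\<D>. Henstock_Kurzweil_Integration.content K *\<^sub>R w x)"
        by (simp add: sum_distrib_left split_def)
      also have "\<dots> \<le> e * (W + 1)"
        using g2c[OF D] e by (intro mult_left_mono) (auto simp: abs_less_iff)
      finally show ?thesis .
    qed
    have split: "(\<Sum>(x,K)\<in>\<D>. Henstock_Kurzweil_Integration.content K *\<^sub>R f x) = (\<Sum>(x,K)\<in>\<D>. Henstock_Kurzweil_Integration.content K *\<^sub>R \<psi> x) + (\<Sum>(x,K)\<in>\<D>. Henstock_Kurzweil_Integration.content K *\<^sub>R (f x - \<psi> x))" for \<D>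
      by (simp add: split_def sum.distrib[symmetric] scaleR_diff_right)
    show "\<exists>\<gamma>. gauge \<gamma> \<and>
          (\<forall>\<D>1 \<D>2. \<D>1 tagged_division_of (cbox a b) \<and> \<gamma> fine \<D>1 \<and>
            \<D>2 tagged_division_of (cbox a b) \<and> \<gamma> fine \<D>2 \<longrightarrow>
            norm ((\<Sum>(x,K)\<in>\<D>1. Henstock_Kurzweil_Integration.content K *\<^sub>R f x) - (\<Sum>(x,K)\<in>\<D>2. Henstock_Kurzweil_Integration.content K *\<^sub>R f x)) < \<epsilon>)"
    proof (intro exI conjI allI impI)
      show "gauge (\<lambda>x. \<gamma>1 x \<inter> \<gamma>2 x)" using g1 g2 by (rule gauge_Int)
      fix \<D>1 \<D>2 assume H: "\<D>1 tagged_division_of cbox a b \<and> (\<lambda>x. \<gamma>1 x \<inter> \<gamma>2 x) fine \<D>1 \<and>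
          \<D>2 tagged_division_of cbox a b \<and> (\<lambda>x. \<gamma>1 x \<inter> \<gamma>2 x) fine \<D>2"
      from H have fi: "\<gamma>1 fine \<D>1" "\<gamma>2 fine \<D>1" "\<gamma>1 fine \<D>2" "\<gamma>2 fine \<D>2" "\<D>1 tagged_division_of cbox a b" "\<D>2 tagged_division_of cbox a b" by (auto simp: fine_Int)
      have A: "norm ((\<Sum>(x,K)\<in>\<D>1. Henstock_Kurzweil_Integration.content K *\<^sub>R \<psi> x) - (\<Sum>(x,K)\<in>\<D>2. Henstock_Kurzweil_Integration.content K *\<^sub>R \<psi> x)) < \<epsilon>/2"
        using g1c fi by blast
      have B1: "norm (\<Sum>(x,K)\<in>\<D>1. Henstock_Kurzweil_Integration.content K *\<^sub>R (f x - \<psi> x)) \<le> e * (W + 1)" using key fi by blast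
      have B2: "norm (\<Sum>(x,K)\<in>\<D>2. Henstock_Kurzweil_Integration.content K *\<^sub>R (f x - \<psi> x)) \<le> e * (W + 1)" using key fi by blast
      have eW: "e * (W + 1) = \<epsilon> / 4" unfolding e_def using W0 by (simp add: field_simps)
      show "norm ((\<Sum>(x,K)\<in>\<D>1. Henstock_Kurzweil_Integration.content K *\<^sub>R f x) - (\<Sum>(x,K)\<in>\<D>2. Henstock_Kurzweil_Integration.content K *\<^sub>R f x)) < \<epsilon>"
      proof -
        let ?a = "(\<Sum>(x,K)\<in>\<D>1. Henstock_Kurzweil_Integration.content K *\<^sub>R \<psi> x) - (\<Sum>(x,K)\<in>\<D>2. Henstock_Kurzweil_Integration.content K *\<^sub>R \<psi> x)"
        let ?b = "(\<Sum>(x,K)\<in>\<D>1. Henstock_Kurzweil_Integration.content K *\<^sub>R (f x - \<psi> x))"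
        let ?c = "(\<Sum>(x,K)\<in>\<D>2. Henstock_Kurzweil_Integration.content K *\<^sub>R (f x - \<psi> x))"
        have eq: "(\<Sum>(x,K)\<in>\<D>1. Henstock_Kurzweil_Integration.content K *\<^sub>R f x) - (\<Sum>(x,K)\<in>\<D>2. Henstock_Kurzweil_Integration.content K *\<^sub>R f x) = ?a + (?b - ?c)"
          unfolding split[of \<D>1] split[of \<D>2] by (simp add: algebra_simps)
        have "norm (?a + (?b - ?c)) \<le> norm ?a + norm ?b + norm ?c"
          using norm_triangle_ineq[of ?a "?b - ?c"] norm_triangle_ineq4[of ?b ?c] by linarith
        then show ?thesis unfolding eq using A B1 B2 eW by linarith
      qed
    qed
  qed
  then have "f integrable_on cbox a b" using integrable_Cauchy[of f a b] by blast
  then show ?thesis by (simp add: cbox_interval)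
qed



lemma PROD:
  fixes g :: "real \<Rightarrow> real" and \<phi> :: "real \<Rightarrow> 'a::banach"
  assumes gi: "g integrable_on {a..b}" and gpos: "\<And>x. x \<in> {a..b} \<Longrightarrow> 0 \<le> g x"
    and \<phi>c: "continuous_on {a..b} \<phi>"
  shows "(\<lambda>x. g x *\<^sub>R \<phi> x) integrable_on {a..b}"
proof (cases "a \<le> b")
  case False
  then show ?thesis by (simp add: integrable_on_empty)
next
  case ab: True
  show ?thesis
  proof (rule WUL[OF gi gpos])
    fix e :: real assume e: "e > 0"
    have "uniformly_continuous_on {a..b} \<phi>" using \<phi>c compact_Icc compact_uniformly_continuous by blast
    then obtain d where d: "d > 0" and dd: "\<And>x y. x \<in> {a..b} \<Longrightarrow> y \<in> {a..b} \<Longrightarrow> dist y x < d \<Longrightarrow> dist (\<phi> y) (\<phi> x) < e"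
      unfolding uniformly_continuous_on_def using e by metis
    obtain n :: nat where n: "(b - a) / d < real n" using reals_Archimedean2 by blast
    have npos: "n > 0" using n d ab
      by (metis divide_nonneg_pos gr0I less_eq_real_def not_less of_nat_0 diff_ge_0_iff_ge)
    define h where "h = (b - a) / real n"
    have h0: "0 \<le> h" unfolding h_def using ab by simp
    have hd: "h < d" unfolding h_def using n d npos by (simp add: field_simps)
    have hn: "a + real n * h = b" unfolding h_def using npos by simp
    have step: "m \<le> n \<Longrightarrow> \<exists>\<psi>. \<psi> integrable_on {a..a + real m * h} \<and>
        (\<forall>x\<in>{a..a + real m * h}. norm (g x *\<^sub>R \<phi> x - \<psi> x) \<le> e * g x)" for m
    proof (induction m)
      case 0
      show ?case
      proof (rule exI[of _ "\<lambda>x. g x *\<^sub>R \<phi> x"], intro conjI)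
        have "(\<lambda>x. g x *\<^sub>R \<phi> x) integrable_on cbox a a" by (rule integrable_on_refl)
        then show "(\<lambda>x. g x *\<^sub>R \<phi> x) integrable_on {a..a + real 0 * h}" by (simp add: cbox_interval)
        show "\<forall>x\<in>{a..a + real 0 * h}. norm (g x *\<^sub>R \<phi> x - g x *\<^sub>R \<phi> x) \<le> e * g x"
          using gpos[of a] ab e by simp
      qed
    next
      case (Suc m)
      then obtain \<psi> where \<psi>i: "\<psi> integrable_on {a..a + real m * h}"
        and \<psi>c: "\<forall>x\<in>{a..a + real m * h}. norm (g x *\<^sub>R \<phi> x - \<psi> x) \<le> e * g x" by auto
      define p where "p = a + real m * h"
      define \<psi>' where "\<psi>' = (\<lambda>x. if x \<le> p then \<psi> x else g x *\<^sub>R \<phi> p)"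
      have mh: "real (Suc m) * h = real m * h + h" by (simp add: algebra_simps)
      have pb: "p + h \<le> b" using Suc.prems hn h0 unfolding p_def
        by (smt (verit, ccfv_SIG) mh mult_right_mono of_nat_le_iff)
      have ap: "a \<le> p" unfolding p_def using h0 by simp
      have I1: "\<psi>' integrable_on {a..p}"
        using \<psi>i unfolding p_def by (rule integrable_eq) (simp add: \<psi>'_def p_def)
      have gi2: "g integrable_on {p..p+h}" using gi ap pb h0 by (intro integrable_on_subinterval[OF gi]) auto
      have I2: "\<psi>' integrable_on {p..p+h}"
      proof (rule integrable_spike_finite[of "{p}"])
        show "(\<lambda>x. g x *\<^sub>R \<phi> p) integrable_on {p..p+h}" using gi2 by (rule integrable_on_scaleR_left)
      qed (auto simp: \<psi>'_def)
      have "\<psi>' integrable_on {a..p+h}"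
        using Henstock_Kurzweil_Integration.integrable_combine[OF ap _ I1 I2] h0 by simp
      moreover have "\<forall>x\<in>{a..p+h}. norm (g x *\<^sub>R \<phi> x - \<psi>' x) \<le> e * g x"
      proof
        fix x assume x: "x \<in> {a..p+h}"
        show "norm (g x *\<^sub>R \<phi> x - \<psi>' x) \<le> e * g x"
        proof (cases "x \<le> p")
          case True
          then show ?thesis using \<psi>c x unfolding \<psi>'_def p_def by auto
        next
          case False
          have xab: "x \<in> {a..b}" and pab: "p \<in> {a..b}" using x pb ap h0 False by auto
          have "dist (\<phi> x) (\<phi> p) < e" using dd[OF pab xab] False x hd by (simp add: dist_real_def)
          then have "norm (\<phi> x - \<phi> p) \<le> e" by (simp add: dist_norm)
          then have "g x * norm (\<phi> x - \<phi> p) \<le> g x * e" using gpos[OF xab] by (rule mult_left_mono)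
          then show ?thesis using False gpos[OF xab] unfolding \<psi>'_def
            by (simp add: scaleR_diff_right[symmetric] mult.commute)
        qed
      qed
      ultimately show ?case unfolding mh p_def by (metis add.assoc)
    qed
    from step[OF order_refl] show "\<exists>\<psi>. \<psi> integrable_on {a..b} \<and> (\<forall>x\<in>{a..b}. norm (g x *\<^sub>R \<phi> x - \<psi> x) \<le> e * g x)"
      unfolding hn .
  qed
qed



lemma count_bound:
  fixes N :: nat and x :: real
  assumes N: "N > 0"
  shows "(\<Sum>i\<in>{1..m}. if real i / N < x then 1 / real N else 0) \<le> max 0 x"
proof (induction m)
  case 0 then show ?case by simp
next
  case (Suc m)
  show ?case
  proof (cases "real (Suc m) / N < x")
    case True
    have "(\<Sum>i\<in>{1..Suc m}. if real i / N < x then 1 / real N else 0) \<le> (\<Sum>i\<in>{1..Suc m}. 1 / real N)"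
      by (rule sum_mono) (simp add: N)
    also have "\<dots> = real (Suc m) / N" by simp
    finally show ?thesis using True by linarith
  next
    case False
    then show ?thesis using Suc.IH by simp
  qed
qed

lemma count_bound2:
  fixes N :: nat and x :: real
  assumes N: "N > 0"
  shows "(\<Sum>i\<in>{1..N-1}. if real i / N < x then 1 / real N else 0) \<le> min 1 (max 0 x)"
proof -
  have "(\<Sum>i\<in>{1..N-1}. if real i / N < x then 1 / real N else 0) \<le> (\<Sum>i\<in>{1..N-1}. 1 / real N)"
    by (rule sum_mono) (simp add: N)
  also have "\<dots> = real (N - 1) / N" by simp
  also have "\<dots> \<le> 1" using N by (simp add: field_simps)
  finally show ?thesis using count_bound[OF N, of x "N-1"] by simp
qed

locale kern =
  fixes \<nu> :: "real measure"
  assumes sets_nu: "sets \<nu> = sets borel"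
    and fin_nu: "(\<integral>\<^sup>+ x. ennreal (min 1 x) \<partial>\<nu>) < \<infinity>"
    and inf_nu: "emeasure \<nu> {0<..} = \<infinity>"
begin

abbreviation "k \<equiv> nu_bar \<nu>"

lemma meas_gt[measurable]: "{x<..} \<in> sets \<nu>"
  using sets_nu by simp

lemma k_nonneg: "0 \<le> k x"
  by (simp add: nu_bar_def)

lemma k_nonpos: assumes "x \<le> 0" shows "k x = 0"
proof -
  have "emeasure \<nu> {0<..} \<le> emeasure \<nu> {x<..}"
    by (rule emeasure_mono) (use assms in auto)
  then have "emeasure \<nu> {x<..} = \<infinity>" using inf_nu by (simp add: top_unique)
  then show ?thesis by (simp add: nu_bar_def measure_def)
qed

lemma k_fin: assumes x: "x > 0" shows "emeasure \<nu> {x<..} < \<infinity>"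
proof -
  have "emeasure \<nu> {x<..} * ennreal (min 1 x) = (\<integral>\<^sup>+ y. ennreal (min 1 x) * indicator {x<..} y \<partial>\<nu>)"
    by (simp add: nn_integral_cmult_indicator mult.commute)
  also have "\<dots> \<le> (\<integral>\<^sup>+ y. ennreal (min 1 y) \<partial>\<nu>)"
    by (rule nn_integral_mono) (auto simp: indicator_def ennreal_leI)
  also have "\<dots> < \<infinity>" by (rule fin_nu)
  finally have *: "emeasure \<nu> {x<..} * ennreal (min 1 x) < \<infinity>" .
  have "ennreal (min 1 x) > 0" using x by simp
  then show ?thesis using * 
    by (metis ennreal_mult_less_top ennreal_neq_top less_top not_gr_zero mult_eq_0_iff infinity_ennreal_def)
qed

lemma k_enn: assumes "x > 0" shows "ennreal (k x) = emeasure \<nu> {x<..}"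
  using k_fin[OF assms] by (simp add: nu_bar_def measure_def ennreal_enn2real_if less_top[symmetric])

lemma k_anti: assumes "0 < x" "x \<le> y" shows "k y \<le> k x"
proof -
  have "emeasure \<nu> {y<..} \<le> emeasure \<nu> {x<..}" by (rule emeasure_mono) (use assms in auto)
  then show ?thesis using k_enn[of x] k_enn[of y] assms k_nonneg
    by (metis ennreal_le_iff order_less_le_trans)
qed

lemma k_large: "\<exists>\<delta>>0. B < k \<delta>"
proof (rule ccontr)
  assume "\<not> ?thesis"
  then have kB: "\<And>\<delta>. \<delta> > 0 \<Longrightarrow> k \<delta> \<le> B" by (meson not_le)
  define A where "A = (\<lambda>n::nat. {1 / real (Suc n)<..})"
  have inc: "incseq A" unfolding A_def incseq_def
    by (auto simp: frac_le intro: order.strict_trans1[rotated])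
  have U: "(\<Union>n. A n) = {0<..}"
  proof
    show "(\<Union>n. A n) \<subseteq> {0<..}"
    proof
      fix x assume "x \<in> (\<Union>n. A n)"
      then obtain n where "1 / real (Suc n) < x" unfolding A_def by auto
      moreover have "0 < 1 / real (Suc n)" by simp
      ultimately have "0 < x" by linarith
      then show "x \<in> {0<..}" by simp
    qed
    show "{0<..} \<subseteq> (\<Union>n. A n)"
    proof
      fix x :: real assume "x \<in> {0<..}"
      then have "0 < x" by simp
      from reals_Archimedean[OF this] obtain n where "inverse (real (Suc n)) < x" by blast
      then have "1 / real (Suc n) < x" by (simp add: inverse_eq_divide)
      then show "x \<in> (\<Union>n. A n)" unfolding A_def by auto
    qed
  qed
  have "(SUP n. emeasure \<nu> (A n)) = emeasure \<nu> (\<Union>n. A n)"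
  proof (rule SUP_emeasure_incseq)
    show "range A \<subseteq> sets \<nu>" by (auto simp: A_def)
    show "incseq A" by (rule inc)
  qed
  also have "\<dots> = \<infinity>" using U inf_nu by simp
  finally have S: "(SUP n. emeasure \<nu> (A n)) = \<infinity>" .
  have "emeasure \<nu> (A n) \<le> ennreal B" for n
  proof -
    have "emeasure \<nu> (A n) = ennreal (k (1 / real (Suc n)))" unfolding A_def by (rule k_enn[symmetric]) simp
    also have "\<dots> \<le> ennreal B" using kB[of "1 / real (Suc n)"] by (simp add: ennreal_leI)
    finally show ?thesis .
  qed
  then have "(SUP n. emeasure \<nu> (A n)) \<le> ennreal B" by (simp add: SUP_least)
  then show False using S by (simp add: top_unique)
qed

end


context kern begin

lemma k_int_pos: assumes "0 < p" shows "k integrable_on {p..q}"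
proof -
  have "mono_on {p..q} (\<lambda>x. - k x)"
    by (rule mono_onI) (use assms k_anti in auto)
  then have "(\<lambda>x. - k x) integrable_on {p..q}" by (rule integrable_on_mono_on)
  then show ?thesis using integrable_neg by fastforce
qed

lemma k_int_le: assumes "0 < p" "p \<le> q" shows "integral {p..q} k \<le> (q - p) * k p"
proof -
  have "integral {p..q} k \<le> integral {p..q} (\<lambda>x. k p)"
    by (rule integral_le) (use k_int_pos[OF assms(1)] k_anti assms in auto)
  also have "\<dots> = (q - p) * k p" using assms by simp
  finally show ?thesis .
qed

lemma riemann: fixes N :: nat assumes N: "N > 0"
  shows "integral {1/N..(real m+1)/N} k \<le> (\<Sum>i\<in>{1..m}. k (real i / N) / N)"
proof (induction m)
  case 0 then show ?case by simp
next
  case (Suc m)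
  have p: "0 < 1 / real N" using N by simp
  have le1: "1/real N \<le> (real m+1)/N" using N by (simp add: divide_right_mono)
  have le2: "(real m+1)/N \<le> (real (Suc m)+1)/N" using N by (simp add: divide_right_mono)
  have "integral {1/N..(real (Suc m)+1)/N} k = integral {1/N..(real m+1)/N} k + integral {(real m+1)/N..(real (Suc m)+1)/N} k"
    using Henstock_Kurzweil_Integration.integral_combine[OF le1 le2 k_int_pos[OF p]] by simp
  also have "integral {(real m+1)/N..(real (Suc m)+1)/N} k \<le> ((real (Suc m)+1)/N - (real m+1)/N) * k ((real m+1)/N)"
    by (rule k_int_le[OF _ le2]) (use N in simp)
  also have "((real (Suc m)+1)/N - (real m+1)/N) * k ((real m+1)/N) = k (real (Suc m) / N) / N"
    using N by (simp add: field_simps)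
  finally show ?case using Suc.IH by (simp add: add.commute)
qed

definition "C = enn2real (\<integral>\<^sup>+ x. ennreal (min 1 x) \<partial>\<nu>)"

lemma C_eq: "ennreal C = (\<integral>\<^sup>+ x. ennreal (min 1 x) \<partial>\<nu>)"
  unfolding C_def using fin_nu by (simp add: ennreal_enn2real_if less_top[symmetric])

lemma sum_le_C: fixes N :: nat assumes N: "N > 0" shows "(\<Sum>i\<in>{1..N-1}. k (real i / N) / N) \<le> C"
proof -
  have "ennreal (\<Sum>i\<in>{1..N-1}. k (real i / N) / N) = (\<Sum>i\<in>{1..N-1}. ennreal (k (real i / N) / N))"
    by (rule sum_ennreal[symmetric]) (simp add: k_nonneg)
  also have "\<dots> = (\<Sum>i\<in>{1..N-1}. \<integral>\<^sup>+ x. ennreal (1 / N) * indicator {real i / N<..} x \<partial>\<nu>)"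
  proof (rule sum.cong[OF refl])
    fix i assume i: "i \<in> {1..N-1}"
    have "real i / N > 0" using i N by auto
    then have "ennreal (k (real i / N) / N) = ennreal (1/N) * emeasure \<nu> {real i / N<..}"
    proof -
      have "ennreal (k (real i / N) / N) = ennreal (1/N) * ennreal (k (real i / N))"
        by (simp add: ennreal_mult'[symmetric] divide_inverse mult.commute)
      then show ?thesis using k_enn[of "real i / N"] \<open>real i / N > 0\<close> by simp
    qed
    then show "ennreal (k (real i / N) / N) = (\<integral>\<^sup>+ x. ennreal (1 / N) * indicator {real i / N<..} x \<partial>\<nu>)"
      by (simp add: nn_integral_cmult_indicator)
  qed
  also have "\<dots> = (\<integral>\<^sup>+ x. (\<Sum>i\<in>{1..N-1}. ennreal (1 / N) * indicator {real i / N<..} x) \<partial>\<nu>)"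
    by (rule nn_integral_sum[symmetric]) simp
  also have "\<dots> \<le> (\<integral>\<^sup>+ x. ennreal (min 1 x) \<partial>\<nu>)"
  proof (rule nn_integral_mono)
    fix x :: real
    have "(\<Sum>i\<in>{1..N-1}. ennreal (1 / N) * indicator {real i / N<..} x) = (\<Sum>i\<in>{1..N-1}. ennreal (if real i / N < x then 1 / real N else 0))"
      by (rule sum.cong) (auto simp: indicator_def)
    also have "\<dots> = ennreal (\<Sum>i\<in>{1..N-1}. if real i / N < x then 1 / real N else 0)"
      by (rule sum_ennreal) simp
    also have "\<dots> \<le> ennreal (min 1 (max 0 x))"
      by (rule ennreal_leI) (rule count_bound2[OF N])
    also have "\<dots> = ennreal (min 1 x)"
      by (cases "x \<le> 0") (auto simp: ennreal_eq_0_iff min_def max_def)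
    finally show "(\<Sum>i\<in>{1..N-1}. ennreal (1 / N) * indicator {real i / N<..} x) \<le> ennreal (min 1 x)" .
  qed
  also have "\<dots> = ennreal C" by (rule C_eq[symmetric])
  finally have *: "ennreal (\<Sum>i\<in>{1..N-1}. k (real i / N) / N) \<le> ennreal C" .
  have C0: "0 \<le> C" by (simp add: C_def)
  show ?thesis by (rule ennreal_le_iff[OF C0, THEN iffD1, OF *])
qed

lemma int_tail_le: fixes N :: nat assumes N: "N > 0" shows "integral {1/N..1} k \<le> C"
proof -
  have "integral {1/N..(real (N-1)+1)/N} k \<le> (\<Sum>i\<in>{1..N-1}. k (real i / N) / N)" by (rule riemann[OF N])
  moreover have "(real (N-1)+1)/N = 1" using N by (simp add: of_nat_diff)
  ultimately have "integral {1/N..1} k \<le> (\<Sum>i\<in>{1..N-1}. k (real i / N) / N)" by (simp only:)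
  then show ?thesis using sum_le_C[OF N] by (rule order_trans)
qed

end


context kern begin

lemma k_int01: "k integrable_on {0..1}"
proof -
  define f where "f = (\<lambda>(n::nat) x. if 1 / real (Suc n) \<le> x then k x else 0)"
  have fint: "f n integrable_on {0..1}" and fval: "integral {0..1} (f n) = integral {1/real (Suc n)..1} k" for n
  proof -
    define c where "c = 1 / real (Suc n)"
    have c0: "0 \<le> c" "0 < c" and c1: "c \<le> 1" unfolding c_def by auto
    have i1: "(f n has_integral 0) {0..c}"
    proof (rule has_integral_spike_finite[of "{c}"])
      show "((\<lambda>x. 0) has_integral 0) {0..c}" by simp
    qed (auto simp: f_def c_def)
    have i2: "(f n has_integral integral {c..1} k) {c..1}"
    proof (rule has_integral_eq[OF _ integrable_integral[OF k_int_pos[OF c0(2)]]])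
      show "\<And>x. x \<in> {c..1} \<Longrightarrow> k x = f n x" by (auto simp: f_def c_def)
    qed
    have "(f n has_integral 0 + integral {c..1} k) {0..1}"
      by (rule has_integral_combine[OF c0(1) c1 i1 i2])
    then show "f n integrable_on {0..1}" "integral {0..1} (f n) = integral {1/real (Suc n)..1} k"
      unfolding c_def by (auto simp: integrable_on_def integral_unique)
  qed
  have "k integrable_on {0..1} \<and> ((\<lambda>n. integral {0..1} (f n)) \<longlongrightarrow> integral {0..1} k) sequentially"
  proof (rule monotone_convergence_increasing)
    show "f n integrable_on {0..1}" for n by (rule fint)
    show "f n x \<le> f (Suc n) x" if "x \<in> {0..1}" for n x
    proof -
      have "1 / real (Suc (Suc n)) \<le> 1 / real (Suc n)" by (simp add: frac_le)
      then show ?thesis unfolding f_def using k_nonneg by auto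
    qed
    show "(\<lambda>n. f n x) \<longlonglongrightarrow> k x" if "x \<in> {0..1}" for x
    proof (cases "x = 0")
      case True
      then show ?thesis by (simp add: f_def k_nonpos)
    next
      case False
      then have "x > 0" using that by auto
      from reals_Archimedean[OF this] obtain N where N: "inverse (real (Suc N)) < x" by blast
      have "eventually (\<lambda>n. f n x = k x) sequentially"
      proof (rule eventually_sequentiallyI[of N])
        fix n assume "N \<le> n"
        then have "1 / real (Suc n) \<le> 1 / real (Suc N)" by (simp add: frac_le)
        then show "f n x = k x" using N unfolding f_def by (simp add: inverse_eq_divide)
      qed
      then show ?thesis by (rule tendsto_eventually)
    qed
    show "bounded (range (\<lambda>n. integral {0..1} (f n)))"
      unfolding bounded_iff
    proof (intro exI ballI)
      fix y assume "y \<in> range (\<lambda>n. integral {0..1} (f n))"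
      then obtain n where y: "y = integral {1/real (Suc n)..1} k" using fval by auto
      have "0 \<le> y" unfolding y
        by (rule Henstock_Kurzweil_Integration.integral_nonneg[OF k_int_pos]) (auto simp: k_nonneg)
      moreover have "y \<le> C" using int_tail_le[of "Suc n"] y by simp
      ultimately show "norm y \<le> C" by simp
    qed
  qed
  then show ?thesis by blast
qed

lemma k_int: "k integrable_on {a..b}"
proof -
  define R where "R = \<bar>a\<bar> + \<bar>b\<bar> + 1"
  have R1: "1 \<le> R" unfolding R_def by simp
  have i1: "k integrable_on {-R..0}"
    by (rule integrable_eq[OF integrable_0]) (auto simp: k_nonpos)
  have i2: "k integrable_on {0..R}"
    using Henstock_Kurzweil_Integration.integrable_combine[of 0 1 R, OF _ R1 k_int01 k_int_pos] by simp
  have "k integrable_on {-R..R}"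
    using Henstock_Kurzweil_Integration.integrable_combine[of "-R" 0 R, OF _ _ i1 i2] R1 by simp
  then show ?thesis
    by (rule integrable_on_subinterval) (auto simp: R_def)
qed

lemma K_tendsto: "((\<lambda>e. integral {0..e} k) \<longlongrightarrow> 0) (at_right 0)"
proof -
  have "continuous_on {0..1} (\<lambda>x. integral {0..x} k)"
    by (rule indefinite_integral_continuous_1[OF k_int01])
  then have "((\<lambda>x. integral {0..x} k) \<longlongrightarrow> integral {0..0} k) (at 0 within {0..1})"
    unfolding continuous_on_def by (metis atLeastAtMost_iff order_refl zero_le_one)
  then have "((\<lambda>x. integral {0..x} k) \<longlongrightarrow> 0) (at 0 within {0..1})" by simp
  then show ?thesis using at_within_Icc_at_right[of "0::real" 1] by simp
qed

lemma k_reflect: "integral {a..b} (\<lambda>r. k (c - r)) = integral {c-b..c-a} k"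
proof -
  have "integral {a..b} (\<lambda>r. k (c - r)) = integral {-(-a)..-(-b)} (\<lambda>x. (k \<circ> (+) c) (- x))"
    by (simp add: o_def)
  also have "\<dots> = integral {-b..-a} (k \<circ> (+) c)"
    by (rule Henstock_Kurzweil_Integration.integral_reflect_real)
  also have "\<dots> = integral {-b+c..-a+c} k" by (rule integral_shift_Icc_real)
  finally show ?thesis by (simp add: algebra_simps)
qed

lemma k_reflect_int: "(\<lambda>r. k (c - r)) integrable_on {a..b}"
proof -
  have "(k \<circ> (+) c) integrable_on {-b..-a}"
    using integrable_on_shift_Icc_real k_int by blast
  then have "(\<lambda>x. (k \<circ> (+) c) (- x)) integrable_on {-(-a)..-(-b)}"
    using Henstock_Kurzweil_Integration.integrable_reflect_real by blast
  then show ?thesis by (simp add: o_def)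
qed

end


lemma int_zero: fixes f :: "real \<Rightarrow> 'a::banach"
  assumes "\<And>x. x \<in> {a..b} \<Longrightarrow> f x = 0" shows "integral {a..b} f = 0"
proof -
  have "integral {a..b} f = integral {a..b} (\<lambda>x. 0::'a)" by (rule integral_cong) (use assms in auto)
  then show ?thesis by simp
qed

context kern begin

lemma conv_int: fixes \<phi> :: "real \<Rightarrow> 'a::banach"
  assumes "continuous_on {a..b} \<phi>"
  shows "(\<lambda>r. k (c - r) *\<^sub>R \<phi> r) integrable_on {a..b}"
  by (rule PROD[OF k_reflect_int _ assms]) (simp add: k_nonneg)

lemma conv_bound: fixes \<phi> :: "real \<Rightarrow> 'a::banach"
  assumes "continuous_on {a..b} \<phi>" and B: "\<And>r. r \<in> {a..b} \<Longrightarrow> norm (\<phi> r) \<le> B"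
  shows "norm (integral {a..b} (\<lambda>r. k (c - r) *\<^sub>R \<phi> r)) \<le> B * integral {c-b..c-a} k"
proof -
  have "norm (integral {a..b} (\<lambda>r. k (c - r) *\<^sub>R \<phi> r)) \<le> integral {a..b} (\<lambda>r. B * k (c - r))"
  proof (rule integral_norm_bound_integral[OF conv_int[OF assms(1)]])
    show "(\<lambda>r. B * k (c - r)) integrable_on {a..b}" using k_reflect_int by (rule integrable_on_mult_right)
    fix r assume r: "r \<in> {a..b}"
    have "norm (k (c - r) *\<^sub>R \<phi> r) = k (c - r) * norm (\<phi> r)" by (simp add: k_nonneg)
    also have "\<dots> \<le> k (c - r) * B" using B[OF r] k_nonneg by (rule mult_left_mono)
    finally show "norm (k (c - r) *\<^sub>R \<phi> r) \<le> B * k (c - r)" by (simp add: mult.commute)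
  qed
  also have "\<dots> = B * integral {c-b..c-a} k"
    by (simp add: Henstock_Kurzweil_Integration.integral_mult_right k_reflect)
  finally show ?thesis .
qed

lemma K_nonneg: "0 \<le> integral {a..b} k"
  by (rule Henstock_Kurzweil_Integration.integral_nonneg[OF k_int]) (simp add: k_nonneg)

end


locale core = kern +
  fixes F :: "'a::banach \<Rightarrow> 'a" and h :: "real \<Rightarrow> 'a"
  assumes F: "bounded_linear F" and hc: "continuous_on {0..} h" and h0: "h 0 = 0"
    and hd: "\<And>t. t > 0 \<Longrightarrow> ((\<lambda>\<tau>. integral {0..\<tau>} (\<lambda>s. k (\<tau> - s) *\<^sub>R h s)) has_vector_derivative F (h t)) (at t)"
begin

definition "I \<tau> = integral {0..\<tau>} (\<lambda>s. k (\<tau> - s) *\<^sub>R h s)"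
definition "hh x = h (max 0 x)"
definition "J x = integral {0..x} hh"

lemma I_deriv: "t > 0 \<Longrightarrow> (I has_vector_derivative F (h t)) (at t)"
  unfolding I_def[abs_def] by (rule hd)

lemma hh_cont: "continuous_on UNIV hh"
  unfolding hh_def
  by (rule continuous_on_compose2[OF hc, of UNIV "\<lambda>x. max 0 x"]) (auto intro!: continuous_intros)

lemma hh_nonpos: "x \<le> 0 \<Longrightarrow> hh x = 0"
  by (simp add: hh_def h0 max_def)

lemma hh_pos: "0 \<le> x \<Longrightarrow> hh x = h x"
  by (simp add: hh_def max_def)

lemma hh_int: "hh integrable_on {a..b}"
  by (rule integrable_continuous_real) (rule continuous_on_subset[OF hh_cont], simp)

lemma J_nonpos: "x \<le> 0 \<Longrightarrow> J x = 0"
  unfolding J_def by (rule int_zero) (auto simp: hh_nonpos)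

lemma J_diff: assumes "x \<le> y" shows "J y - J x = integral {x..y} hh"
proof (cases "0 \<le> x")
  case True
  then show ?thesis unfolding J_def
    using Henstock_Kurzweil_Integration.integral_combine[OF True assms hh_int] by (simp add: algebra_simps)
next
  case False
  then have Jx: "J x = 0" by (simp add: J_nonpos)
  show ?thesis
  proof (cases "0 \<le> y")
    case True
    have "integral {x..0} hh + integral {0..y} hh = integral {x..y} hh"
      using Henstock_Kurzweil_Integration.integral_combine[of x 0 y, OF _ True hh_int] False by simp
    moreover have "integral {x..0} hh = 0" by (rule int_zero) (auto simp: hh_nonpos)
    ultimately show ?thesis using Jx unfolding J_def by simp
  next
    case False
    then show ?thesis using Jx J_nonpos[of y] int_zero[of x y hh] by (simp add: hh_nonpos)
  qed
qed

lemma J_cont: "continuous_on UNIV J"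
proof -
  have "isCont J x" for x
  proof -
    define R where "R = \<bar>x\<bar> + 1"
    have "continuous_on {-R..R} (\<lambda>y. integral {-R..y} hh)"
      by (rule indefinite_integral_continuous_1[OF hh_int])
    moreover have "J y = integral {-R..y} hh" if "y \<in> {-R..R}" for y
      using J_diff[of "-R" y] that J_nonpos[of "-R"] by (simp add: R_def)
    ultimately have "continuous_on {-R..R} J" using continuous_on_eq by (metis (no_types, lifting))
    then show "isCont J x"
      by (rule continuous_on_interior) (auto simp: R_def)
  qed
  then show ?thesis by (simp add: continuous_on_eq_continuous_at)
qed

lemma J_lip: assumes "r \<le> s" "\<And>y. y \<in> {r..s} \<Longrightarrow> norm (hh y) \<le> L"
  shows "norm (J s - J r) \<le> L * (s - r)"
  unfolding J_diff[OF assms(1)]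
  by (rule integral_bound[OF assms(1) continuous_on_subset[OF hh_cont] assms(2)]) auto

lemma J_approx: assumes "0 < \<epsilon>" "\<And>s. s \<in> {r-\<epsilon>..r} \<Longrightarrow> norm (hh s - hh r) \<le> \<eta>"
  shows "norm ((J r - J (r - \<epsilon>)) - \<epsilon> *\<^sub>R hh r) \<le> \<eta> * \<epsilon>"
proof -
  have le: "r - \<epsilon> \<le> r" using assms by simp
  have "(J r - J (r - \<epsilon>)) - \<epsilon> *\<^sub>R hh r = integral {r-\<epsilon>..r} hh - integral {r-\<epsilon>..r} (\<lambda>s. hh r)"
    using J_diff[OF le] le by simp
  also have "\<dots> = integral {r-\<epsilon>..r} (\<lambda>s. hh s - hh r)"
    by (rule integral_diff[symmetric]) (auto simp: hh_int)
  finally have eq: "(J r - J (r - \<epsilon>)) - \<epsilon> *\<^sub>R hh r = integral {r-\<epsilon>..r} (\<lambda>s. hh s - hh r)" .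
  have "norm (integral {r-\<epsilon>..r} (\<lambda>s. hh s - hh r)) \<le> \<eta> * (r - (r - \<epsilon>))"
    by (rule integral_bound[OF le]) (auto intro!: continuous_intros continuous_on_subset[OF hh_cont] assms(2))
  then show ?thesis unfolding eq by simp
qed

lemma I_zero: "I 0 = 0"
  unfolding I_def by (rule int_zero) (simp add: k_nonpos)

lemma I_tendsto0: "(I \<longlongrightarrow> 0) (at_right 0)"
proof -
  have "compact (h ` {0..1})" by (rule compact_continuous_image[OF continuous_on_subset[OF hc]]) auto
  then obtain B where B: "\<And>x. x \<in> {0..1} \<Longrightarrow> norm (h x) \<le> B"
    using compact_imp_bounded bounded_iff by (metis imageI)
  show ?thesis
  proof (rule Lim_null_comparison)
    show "eventually (\<lambda>\<tau>. norm (I \<tau>) \<le> B * integral {0..\<tau>} k) (at_right 0)"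
    proof (rule eventually_at_rightI[of 0 1])
      fix \<tau> :: real assume \<tau>: "\<tau> \<in> {0<..<1}"
      have "norm (I \<tau>) \<le> B * integral {\<tau>-\<tau>..\<tau>-0} k"
        unfolding I_def
        by (rule conv_bound) (use \<tau> B in \<open>auto intro: continuous_on_subset[OF hc]\<close>)
      then show "norm (I \<tau>) \<le> B * integral {0..\<tau>} k" by simp
    qed simp
    show "((\<lambda>\<tau>. B * integral {0..\<tau>} k) \<longlongrightarrow> 0) (at_right 0)"
      using tendsto_mult_right_zero[OF K_tendsto, of B] by simp
  qed
qed

lemma I_FTC: assumes t: "0 \<le> t" shows "I t = F (J t)"
proof (cases "t = 0")
  case True
  then show ?thesis using I_zero J_nonpos[of 0] F by (simp add: linear_simps)
next
  case False
  then have t0: "0 < t" using t by simp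
  have cont: "continuous_on {0..t} I"
  proof -
    have "continuous (at x within {0..t}) I" if x: "x \<in> {0..t}" for x
    proof (cases "x = 0")
      case True
      have "(I \<longlongrightarrow> I 0) (at 0 within {0..t})"
        using I_tendsto0 I_zero at_within_Icc_at_right[OF t0] by simp
      then show ?thesis using True by (simp add: continuous_within)
    next
      case False
      then have "x > 0" using x by simp
      then have "isCont I x" using I_deriv has_vector_derivative_continuous by blast
      then show ?thesis by (rule continuous_at_imp_continuous_at_within)
    qed
    then show ?thesis by (simp add: continuous_on_eq_continuous_within)
  qed
  have "((\<lambda>x. F (h x)) has_integral I t - I 0) {0..t}"
    by (rule fundamental_theorem_of_calculus_interior[OF t cont]) (auto intro: I_deriv)
  then have "I t = integral {0..t} (\<lambda>x. F (h x))" using I_zero by (simp add: integral_unique)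
  also have "\<dots> = integral {0..t} (\<lambda>x. F (hh x))" by (rule integral_cong) (simp add: hh_pos)
  also have "\<dots> = F (integral {0..t} hh)"
    using integral_linear[OF hh_int F] by (simp add: o_def)
  finally show ?thesis by (simp add: J_def)
qed

end


context core begin

lemma Jc_int: "(\<lambda>r. k (c - r) *\<^sub>R J (r - e)) integrable_on {a..b}"
  by (rule conv_int) (auto intro!: continuous_on_compose2[OF J_cont] continuous_intros)

lemma Jc_int0: "(\<lambda>r. k (c - r) *\<^sub>R J r) integrable_on {a..b}"
  by (rule conv_int) (rule continuous_on_subset[OF J_cont], simp)

lemma hh_int_c: "(\<lambda>r. k (c - r) *\<^sub>R hh r) integrable_on {a..b}"
  by (rule conv_int) (rule continuous_on_subset[OF hh_cont], simp)

lemma part_a: assumes t: "0 < t"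
  shows "((\<lambda>\<epsilon>. (1/\<epsilon>) *\<^sub>R integral {0..t} (\<lambda>r. k (t-r) *\<^sub>R (J r - J (r-\<epsilon>)))) \<longlongrightarrow> I t) (at_right 0)"
proof -
  have It: "I t = integral {0..t} (\<lambda>r. k (t-r) *\<^sub>R hh r)"
    unfolding I_def by (rule integral_cong) (simp add: hh_pos)
  have diff: "(1/\<epsilon>) *\<^sub>R integral {0..t} (\<lambda>r. k (t-r) *\<^sub>R (J r - J (r-\<epsilon>))) - I t
      = integral {0..t} (\<lambda>r. k (t-r) *\<^sub>R ((1/\<epsilon>) *\<^sub>R (J r - J (r-\<epsilon>)) - hh r))" for \<epsilon>
  proof -
    have i1: "(\<lambda>r. k (t-r) *\<^sub>R (J r - J (r-\<epsilon>))) integrable_on {0..t}"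
      using integrable_diff[OF Jc_int0[of t 0 t] Jc_int[of t \<epsilon> 0 t]] by (simp add: scaleR_diff_right)
    have "(1/\<epsilon>) *\<^sub>R integral {0..t} (\<lambda>r. k (t-r) *\<^sub>R (J r - J (r-\<epsilon>))) = integral {0..t} (\<lambda>r. (1/\<epsilon>) *\<^sub>R (k (t-r) *\<^sub>R (J r - J (r-\<epsilon>))))"
      by (rule integral_cmul[symmetric])
    then have "(1/\<epsilon>) *\<^sub>R integral {0..t} (\<lambda>r. k (t-r) *\<^sub>R (J r - J (r-\<epsilon>))) - I t
      = integral {0..t} (\<lambda>r. (1/\<epsilon>) *\<^sub>R (k (t-r) *\<^sub>R (J r - J (r-\<epsilon>))) - k (t-r) *\<^sub>R hh r)"
      unfolding It using integral_diff[OF integrable_cmul[OF i1, of "1/\<epsilon>"] hh_int_c[of t 0 t]] by simp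
    also have "\<dots> = integral {0..t} (\<lambda>r. k (t-r) *\<^sub>R ((1/\<epsilon>) *\<^sub>R (J r - J (r-\<epsilon>)) - hh r))"
      by (rule integral_cong) (simp add: algebra_simps)
    finally show ?thesis .
  qed
  have "uniformly_continuous_on {-1..t} hh"
    using compact_uniformly_continuous[OF continuous_on_subset[OF hh_cont]] by auto
  then have uc: "\<forall>\<eta>>0. \<exists>d>0. \<forall>x\<in>{-1..t}. \<forall>y\<in>{-1..t}. dist y x < d \<longrightarrow> dist (hh y) (hh x) < \<eta>"
    unfolding uniformly_continuous_on_def by blast
  define Kt where "Kt = integral {0..t} k"
  have Kt0: "0 \<le> Kt" unfolding Kt_def by (rule K_nonneg)
  show ?thesis
    unfolding tendsto_iff
  proof (intro allI impI)
    fix e :: real assume e: "e > 0"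
    define \<eta> where "\<eta> = e / (2 * (Kt + 1))"
    have \<eta>: "\<eta> > 0" unfolding \<eta>_def using e Kt0 by simp
    obtain d where d: "d > 0" and dd: "\<And>x y. x\<in>{-1..t} \<Longrightarrow> y\<in>{-1..t} \<Longrightarrow> dist y x < d \<Longrightarrow> dist (hh y) (hh x) < \<eta>"
      using uc \<eta> by blast
    show "eventually (\<lambda>\<epsilon>. dist ((1/\<epsilon>) *\<^sub>R integral {0..t} (\<lambda>r. k (t-r) *\<^sub>R (J r - J (r-\<epsilon>)))) (I t) < e) (at_right 0)"
    proof (rule eventually_at_rightI[of 0 "min d 1"])
      fix \<epsilon> :: real assume \<epsilon>: "\<epsilon> \<in> {0<..<min d 1}"
      have bnd: "norm ((1/\<epsilon>) *\<^sub>R (J r - J (r-\<epsilon>)) - hh r) \<le> \<eta>" if r: "r \<in> {0..t}" for r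
      proof -
        have "norm ((J r - J (r - \<epsilon>)) - \<epsilon> *\<^sub>R hh r) \<le> \<eta> * \<epsilon>"
        proof (rule J_approx)
          show "0 < \<epsilon>" using \<epsilon> by simp
          fix s assume s: "s \<in> {r-\<epsilon>..r}"
          have "dist (hh s) (hh r) < \<eta>" using dd[of r s] r s \<epsilon> by (auto simp: dist_real_def)
          then show "norm (hh s - hh r) \<le> \<eta>" by (simp add: dist_norm)
        qed
        moreover have "(J r - J (r - \<epsilon>)) - \<epsilon> *\<^sub>R hh r = \<epsilon> *\<^sub>R ((1/\<epsilon>) *\<^sub>R (J r - J (r-\<epsilon>)) - hh r)"
          using \<epsilon> by (simp add: algebra_simps)
        ultimately have "\<epsilon> * norm ((1/\<epsilon>) *\<^sub>R (J r - J (r-\<epsilon>)) - hh r) \<le> \<epsilon> * \<eta>"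
          using \<epsilon> by (simp add: mult.commute)
        then show ?thesis using \<epsilon> by simp
      qed
      have "norm (integral {0..t} (\<lambda>r. k (t-r) *\<^sub>R ((1/\<epsilon>) *\<^sub>R (J r - J (r-\<epsilon>)) - hh r))) \<le> \<eta> * integral {t-t..t-0} k"
        by (rule conv_bound[OF _ bnd])
          (auto intro!: continuous_intros continuous_on_compose2[OF J_cont] continuous_on_subset[OF hh_cont])
      also have "\<dots> = \<eta> * Kt" by (simp add: Kt_def)
      also have "\<dots> < e"
      proof -
        have "\<eta> * Kt \<le> \<eta> * (Kt + 1)" using \<eta> by simp
        moreover have "\<eta> * (Kt + 1) = e / 2" unfolding \<eta>_def using Kt0 by (simp add: field_simps)
        ultimately show ?thesis using e by linarith
      qed
      finally show "dist ((1/\<epsilon>) *\<^sub>R integral {0..t} (\<lambda>r. k (t-r) *\<^sub>R (J r - J (r-\<epsilon>)))) (I t) < e"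
        by (simp add: dist_norm diff)
    qed (use d in simp)
  qed
qed

end


context core begin

lemma k_scaleR_int: "integral {a..b} (\<lambda>r. k (c - r) *\<^sub>R v) = integral {c-b..c-a} k *\<^sub>R v"
proof -
  have "((\<lambda>r. k (c - r) *\<^sub>R v) has_integral integral {a..b} (\<lambda>r. k (c - r)) *\<^sub>R v) {a..b}"
    by (rule has_integral_scaleR_left[OF integrable_integral[OF k_reflect_int]])
  then show ?thesis by (simp add: integral_unique k_reflect)
qed

lemma part_b:
  assumes S: "0 \<le> S" and \<epsilon>: "0 < \<epsilon>" "\<epsilon> < t - S"
    and J0: "\<And>x. x \<in> {0..S} \<Longrightarrow> J x = 0"
    and Mx: "\<And>y. y \<in> {0..t} \<Longrightarrow> norm (J y) \<le> norm (J t)"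
    and L: "\<And>y. y \<in> {0..t} \<Longrightarrow> norm (hh y) \<le> L"
  shows "\<epsilon> * (k (t - S) * norm (J t)) - \<epsilon> * L * integral {0..\<epsilon>} k
          \<le> norm (integral {0..t} (\<lambda>r. k (t-r) *\<^sub>R (J r - J (r-\<epsilon>))))"
proof -
  define c where "c = J t"
  define M where "M = norm c"
  define \<rho> where "\<rho> = t - S"
  define K\<epsilon> where "K\<epsilon> = integral {0..\<epsilon>} k"
  have M0: "0 \<le> M" unfolding M_def by simp
  have L0: "0 \<le> L" using L[of 0] S \<epsilon> by (auto intro: order_trans[OF norm_ge_zero])
  have K\<epsilon>0: "0 \<le> K\<epsilon>" unfolding K\<epsilon>_def by (rule K_nonneg)
  have o1: "S \<le> t - \<epsilon>" "t - \<epsilon> \<le> t" "-\<epsilon> \<le> 0" "0 \<le> t" "-\<epsilon> \<le> t - \<epsilon>" "0 \<le> t - \<epsilon>" using S \<epsilon> by auto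
  define G where "G = (\<lambda>s. k (t - \<epsilon> - s) *\<^sub>R J s)"
  have GI: "G integrable_on {a..b}" for a b unfolding G_def by (rule Jc_int0)
  have "integral {0..t} (\<lambda>r. k (t-r) *\<^sub>R J (r-\<epsilon>)) = integral {0..t} (G \<circ> (+) (-\<epsilon>))"
    by (rule integral_cong) (simp add: G_def algebra_simps)
  also have "\<dots> = integral {0 + -\<epsilon>..t + -\<epsilon>} G" by (rule integral_shift_Icc_real)
  finally have sh1: "integral {0..t} (\<lambda>r. k (t-r) *\<^sub>R J (r-\<epsilon>)) = integral {-\<epsilon>..t-\<epsilon>} G" by simp
  have c1: "integral {-\<epsilon>..t-\<epsilon>} G + integral {t-\<epsilon>..t} G = integral {-\<epsilon>..t} G"
    by (rule Henstock_Kurzweil_Integration.integral_combine[OF o1(5) o1(2) GI])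
  have z1: "integral {t-\<epsilon>..t} G = 0" unfolding G_def by (rule int_zero) (simp add: k_nonpos)
  have c2: "integral {-\<epsilon>..0} G + integral {0..t} G = integral {-\<epsilon>..t} G"
    by (rule Henstock_Kurzweil_Integration.integral_combine[OF o1(3) o1(4) GI])
  have z2: "integral {-\<epsilon>..0} G = 0" unfolding G_def by (rule int_zero) (simp add: J_nonpos)
  have shift: "integral {0..t} (\<lambda>r. k (t-r) *\<^sub>R J (r-\<epsilon>)) = integral {0..t} G"
    using sh1 c1 z1 c2 z2 by simp
  define A1 where "A1 = integral {0..t} (\<lambda>r. k (t-r) *\<^sub>R J r)"
  have E: "integral {0..t} (\<lambda>r. k (t-r) *\<^sub>R (J r - J (r-\<epsilon>))) = A1 - integral {0..t} G"
    unfolding A1_def shift[symmetric] scaleR_diff_right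
    by (rule integral_diff[OF Jc_int0 Jc_int])
  define P where "P = integral {t-\<epsilon>..t} (\<lambda>r. k (t-r) *\<^sub>R J r)"
  define Q1 where "Q1 = integral {S..t-\<epsilon>} (\<lambda>r. k (t-r) *\<^sub>R J r)"
  define Q2 where "Q2 = integral {S..t-\<epsilon>} G"
  have A1s: "A1 = P + Q1"
  proof -
    have "integral {0..S} (\<lambda>r. k (t-r) *\<^sub>R J r) + integral {S..t} (\<lambda>r. k (t-r) *\<^sub>R J r) = A1"
      unfolding A1_def using S o1 by (intro Henstock_Kurzweil_Integration.integral_combine Jc_int0) auto
    moreover have "integral {S..t-\<epsilon>} (\<lambda>r. k (t-r) *\<^sub>R J r) + integral {t-\<epsilon>..t} (\<lambda>r. k (t-r) *\<^sub>R J r) = integral {S..t} (\<lambda>r. k (t-r) *\<^sub>R J r)"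
      using o1 by (intro Henstock_Kurzweil_Integration.integral_combine Jc_int0) auto
    moreover have "integral {0..S} (\<lambda>r. k (t-r) *\<^sub>R J r) = 0" by (rule int_zero) (simp add: J0)
    ultimately show ?thesis unfolding P_def Q1_def by (simp add: add.commute)
  qed
  have A2s: "integral {0..t} G = Q2"
  proof -
    have "integral {0..S} G + integral {S..t} G = integral {0..t} G"
      using S o1 by (intro Henstock_Kurzweil_Integration.integral_combine GI) auto
    moreover have "integral {S..t-\<epsilon>} G + integral {t-\<epsilon>..t} G = integral {S..t} G"
      using o1 by (intro Henstock_Kurzweil_Integration.integral_combine GI) auto
    moreover have "integral {0..S} G = 0" unfolding G_def by (rule int_zero) (simp add: J0)
    ultimately show ?thesis using z1 unfolding Q2_def by simp
  qed
  define R where "R = integral {t-\<epsilon>..t} (\<lambda>r. k (t-r) *\<^sub>R (J r - c))"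
  have PR: "P = K\<epsilon> *\<^sub>R c + R"
  proof -
    have "R = P - integral {t-\<epsilon>..t} (\<lambda>r. k (t-r) *\<^sub>R c)"
      unfolding R_def P_def scaleR_diff_right
      by (rule integral_diff[OF Jc_int0 integrable_on_scaleR_left[OF k_reflect_int]])
    moreover have "integral {t-\<epsilon>..t} (\<lambda>r. k (t-r) *\<^sub>R c) = K\<epsilon> *\<^sub>R c"
      unfolding k_scaleR_int K\<epsilon>_def by simp
    ultimately show ?thesis by simp
  qed
  have Rb: "norm R \<le> (L * \<epsilon>) * K\<epsilon>"
  proof -
    have "norm R \<le> (L * \<epsilon>) * integral {t-t..t-(t-\<epsilon>)} k"
      unfolding R_def
    proof (rule conv_bound)
      show "continuous_on {t-\<epsilon>..t} (\<lambda>r. J r - c)"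
        by (intro continuous_intros continuous_on_subset[OF J_cont]) auto
      fix r assume r: "r \<in> {t-\<epsilon>..t}"
      have "norm (J t - J r) \<le> L * (t - r)"
        by (rule J_lip) (use r o1 S L in auto)
      also have "\<dots> \<le> L * \<epsilon>" using r L0 by (intro mult_left_mono) auto
      finally show "norm (J r - c) \<le> L * \<epsilon>" unfolding c_def by (simp add: norm_minus_commute)
    qed
    then show ?thesis by (simp add: K\<epsilon>_def)
  qed
  define w where "w = (\<lambda>r. if r < t - \<epsilon> then k (t-\<epsilon>-r) - k (t-r) else 0)"
  have Qd: "Q2 - Q1 = integral {S..t-\<epsilon>} (\<lambda>r. (k (t-\<epsilon>-r) - k (t-r)) *\<^sub>R J r)"
    unfolding Q1_def Q2_def G_def scaleR_diff_left
    by (rule integral_diff[OF Jc_int0 Jc_int0, symmetric])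
  have negl: "negligible {t - \<epsilon>}" by simp
  have Qd2: "integral {S..t-\<epsilon>} (\<lambda>r. (k (t-\<epsilon>-r) - k (t-r)) *\<^sub>R J r) = integral {S..t-\<epsilon>} (\<lambda>r. w r *\<^sub>R J r)"
    by (rule integral_spike[OF negl]) (auto simp: w_def)
  have wint: "(\<lambda>r. w r *\<^sub>R J r) integrable_on {S..t-\<epsilon>}"
  proof (rule integrable_spike_finite[of "{t-\<epsilon>}"])
    show "(\<lambda>r. (k (t-\<epsilon>-r) - k (t-r)) *\<^sub>R J r) integrable_on {S..t-\<epsilon>}"
      unfolding scaleR_diff_left by (rule integrable_diff[OF Jc_int0 Jc_int0])
  qed (auto simp: w_def)
  have kdi: "(\<lambda>r. k (t-\<epsilon>-r) - k (t-r)) integrable_on {S..t-\<epsilon>}"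
    by (rule integrable_diff[OF k_reflect_int k_reflect_int])
  have wMint: "(\<lambda>r. w r * M) integrable_on {S..t-\<epsilon>}"
  proof (rule integrable_spike_finite[of "{t-\<epsilon>}"])
    show "(\<lambda>r. (k (t-\<epsilon>-r) - k (t-r)) * M) integrable_on {S..t-\<epsilon>}"
      using kdi by (rule integrable_on_mult_left)
  qed (auto simp: w_def)
  have Qdb: "norm (Q2 - Q1) \<le> integral {S..t-\<epsilon>} (\<lambda>r. w r * M)"
    unfolding Qd Qd2
  proof (rule integral_norm_bound_integral[OF wint wMint])
    fix r assume r: "r \<in> {S..t-\<epsilon>}"
    have w0: "0 \<le> w r"
    proof (cases "r < t - \<epsilon>")
      case True
      then have "k (t-r) \<le> k (t-\<epsilon>-r)" using \<epsilon> by (intro k_anti) auto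
      then show ?thesis using True by (simp add: w_def)
    qed (simp add: w_def)
    have "norm (J r) \<le> M" unfolding M_def c_def using Mx[of r] r S o1 by auto
    then show "norm (w r *\<^sub>R J r) \<le> w r * M" using w0 by (simp add: mult_left_mono)
  qed
  have wMval: "integral {S..t-\<epsilon>} (\<lambda>r. w r * M) = (integral {0..\<rho>-\<epsilon>} k - integral {\<epsilon>..\<rho>} k) * M"
  proof -
    have "integral {S..t-\<epsilon>} (\<lambda>r. w r * M) = integral {S..t-\<epsilon>} (\<lambda>r. (k (t-\<epsilon>-r) - k (t-r)) * M)"
      by (rule integral_spike[OF negl]) (auto simp: w_def)
    also have "\<dots> = integral {S..t-\<epsilon>} (\<lambda>r. k (t-\<epsilon>-r) - k (t-r)) * M"
      by (rule Henstock_Kurzweil_Integration.integral_mult_left)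
    also have "integral {S..t-\<epsilon>} (\<lambda>r. k (t-\<epsilon>-r) - k (t-r)) = integral {S..t-\<epsilon>} (\<lambda>r. k (t-\<epsilon>-r)) - integral {S..t-\<epsilon>} (\<lambda>r. k (t-r))"
      by (rule integral_diff[OF k_reflect_int k_reflect_int])
    also have "\<dots> = integral {0..\<rho>-\<epsilon>} k - integral {\<epsilon>..\<rho>} k"
    proof -
      have eqx: "t - \<epsilon> - S = t - S - \<epsilon>" by simp
      show ?thesis unfolding k_reflect \<rho>_def by (simp add: eqx)
    qed
    finally show ?thesis .
  qed
  have b7: "integral {0..\<rho>-\<epsilon>} k - integral {\<epsilon>..\<rho>} k = K\<epsilon> - integral {\<rho>-\<epsilon>..\<rho>} k"
  proof -
    have "integral {0..\<rho>-\<epsilon>} k + integral {\<rho>-\<epsilon>..\<rho>} k = integral {0..\<rho>} k"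
      using \<epsilon> by (intro Henstock_Kurzweil_Integration.integral_combine k_int) (auto simp: \<rho>_def)
    moreover have "integral {0..\<epsilon>} k + integral {\<epsilon>..\<rho>} k = integral {0..\<rho>} k"
      using \<epsilon> by (intro Henstock_Kurzweil_Integration.integral_combine k_int) (auto simp: \<rho>_def)
    ultimately show ?thesis unfolding K\<epsilon>_def by simp
  qed
  have b8: "\<epsilon> * k \<rho> \<le> integral {\<rho>-\<epsilon>..\<rho>} k"
  proof -
    have "integral {\<rho>-\<epsilon>..\<rho>} (\<lambda>x. k \<rho>) \<le> integral {\<rho>-\<epsilon>..\<rho>} k"
      by (rule integral_le) (use \<epsilon> in \<open>auto simp: \<rho>_def k_int intro!: k_anti\<close>)
    then show ?thesis using \<epsilon> by simp
  qed
  have Eeq: "integral {0..t} (\<lambda>r. k (t-r) *\<^sub>R (J r - J (r-\<epsilon>))) = K\<epsilon> *\<^sub>R c + R - (Q2 - Q1)"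
    unfolding E A1s A2s PR by (simp add: algebra_simps)
  have tri: "norm (K\<epsilon> *\<^sub>R c) \<le> norm (K\<epsilon> *\<^sub>R c + R - (Q2 - Q1)) + norm R + norm (Q2 - Q1)"
    by (smt (verit) norm_triangle_ineq4 norm_triangle_ineq add_diff_cancel_right' diff_add_cancel)
  have n1: "norm (K\<epsilon> *\<^sub>R c) = K\<epsilon> * M" unfolding M_def using K\<epsilon>0 by simp
  have Qdb2: "norm (Q2 - Q1) \<le> K\<epsilon> * M - \<epsilon> * k \<rho> * M"
  proof -
    have "norm (Q2 - Q1) \<le> (K\<epsilon> - integral {\<rho>-\<epsilon>..\<rho>} k) * M" using Qdb unfolding wMval b7 .
    also have "\<dots> \<le> (K\<epsilon> - \<epsilon> * k \<rho>) * M" using b8 M0 by (intro mult_right_mono) auto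
    finally show ?thesis by (simp add: algebra_simps)
  qed
  have "\<epsilon> * (k \<rho> * M) - \<epsilon> * L * K\<epsilon> \<le> norm (K\<epsilon> *\<^sub>R c + R - (Q2 - Q1))"
    using tri n1 Rb Qdb2 by (simp add: algebra_simps)
  then show ?thesis unfolding Eeq M_def c_def \<rho>_def K\<epsilon>_def .
qed

end


context core begin

lemma key_step:
  assumes \<delta>: "0 < \<delta>" "onorm F < k \<delta>" and S: "0 \<le> S" and J0: "\<And>x. x \<in> {0..S} \<Longrightarrow> J x = 0"
    and x: "x \<in> {0..S+\<delta>}"
  shows "J x = 0"
proof -
  define T where "T = S + \<delta>"
  have "\<exists>t\<in>{0..T}. \<forall>y\<in>{0..T}. norm (J y) \<le> norm (J t)"
    by (rule continuous_attains_sup)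
      (use S \<delta> in \<open>auto simp: T_def intro!: continuous_intros continuous_on_subset[OF J_cont]\<close>)
  then obtain t where t: "t \<in> {0..T}" and tmax: "\<And>y. y \<in> {0..T} \<Longrightarrow> norm (J y) \<le> norm (J t)" by blast
  have M0: "norm (J t) = 0"
  proof (rule ccontr)
    assume "norm (J t) \<noteq> 0"
    then have Mpos: "norm (J t) > 0" by simp
    have tS: "S < t"
    proof (rule ccontr)
      assume "\<not> S < t"
      then have "J t = 0" using J0 t by auto
      then show False using Mpos by simp
    qed
    have t0: "0 < t" using tS S by simp
    have kr: "k \<delta> \<le> k (t - S)" using tS t \<delta> by (intro k_anti) (auto simp: T_def)
    have "compact (hh ` {0..t})" by (rule compact_continuous_image[OF continuous_on_subset[OF hh_cont]]) auto
    then obtain L where L: "\<And>y. y \<in> {0..t} \<Longrightarrow> norm (hh y) \<le> L"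
      using compact_imp_bounded bounded_iff by (metis imageI)
    have Mx: "\<And>y. y \<in> {0..t} \<Longrightarrow> norm (J y) \<le> norm (J t)" using tmax t by auto
    define E where "E = (\<lambda>\<epsilon>. integral {0..t} (\<lambda>r. k (t-r) *\<^sub>R (J r - J (r-\<epsilon>))))"
    have lim1: "((\<lambda>\<epsilon>. norm ((1/\<epsilon>) *\<^sub>R E \<epsilon>)) \<longlongrightarrow> norm (I t)) (at_right 0)"
      unfolding E_def by (rule tendsto_norm[OF part_a[OF t0]])
    have lim2: "((\<lambda>\<epsilon>. k (t - S) * norm (J t) - L * integral {0..\<epsilon>} k) \<longlongrightarrow> k (t - S) * norm (J t) - L * 0) (at_right 0)"
      by (intro tendsto_intros K_tendsto)
    have ev: "eventually (\<lambda>\<epsilon>. k (t - S) * norm (J t) - L * integral {0..\<epsilon>} k \<le> norm ((1/\<epsilon>) *\<^sub>R E \<epsilon>)) (at_right 0)"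
    proof (rule eventually_at_rightI[of 0 "t - S"])
      fix \<epsilon> :: real assume \<epsilon>: "\<epsilon> \<in> {0<..<t - S}"
      have "\<epsilon> * (k (t - S) * norm (J t)) - \<epsilon> * L * integral {0..\<epsilon>} k \<le> norm (E \<epsilon>)"
        unfolding E_def by (rule part_b[OF S _ _ J0 Mx L]) (use \<epsilon> in auto)
      then have "\<epsilon> * (k (t - S) * norm (J t) - L * integral {0..\<epsilon>} k) \<le> norm (E \<epsilon>)"
        by (simp add: algebra_simps)
      then have "k (t - S) * norm (J t) - L * integral {0..\<epsilon>} k \<le> norm (E \<epsilon>) / \<epsilon>"
        using \<epsilon> by (simp add: pos_le_divide_eq mult.commute)
      then show "k (t - S) * norm (J t) - L * integral {0..\<epsilon>} k \<le> norm ((1/\<epsilon>) *\<^sub>R E \<epsilon>)"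
        using \<epsilon> by simp
    qed (use tS in simp)
    have "k (t - S) * norm (J t) - L * 0 \<le> norm (I t)"
      by (rule tendsto_le[OF trivial_limit_at_right_real lim1 lim2 ev])
    then have A: "k (t - S) * norm (J t) \<le> norm (I t)" by simp
    have "norm (I t) = norm (F (J t))" using I_FTC t0 by simp
    also have "\<dots> \<le> onorm F * norm (J t)" by (rule onorm[OF F])
    also have "\<dots> < k \<delta> * norm (J t)" using \<delta>(2) Mpos by simp
    also have "\<dots> \<le> k (t - S) * norm (J t)" using kr Mpos by simp
    finally show False using A by simp
  qed
  have "norm (J x) \<le> norm (J t)" using tmax x by (simp add: T_def)
  then show ?thesis using M0 by simp
qed

lemma core_result: assumes "0 \<le> t" shows "h t = 0"
proof -
  obtain \<delta> where \<delta>: "0 < \<delta>" "onorm F < k \<delta>" using k_large by blast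
  have all: "\<And>x. x \<in> {0..real n * \<delta>} \<Longrightarrow> J x = 0" for n :: nat
  proof (induction n)
    case 0
    then show ?case using J_nonpos by simp
  next
    case (Suc n)
    have "J x = 0" if "x \<in> {0..real n * \<delta> + \<delta>}" for x
      by (rule key_step[OF \<delta> _ Suc.IH that]) (use \<delta> in simp)
    then show ?case using Suc.prems by (simp add: algebra_simps)
  qed
  have Jz: "J x = 0" if "0 \<le> x" for x
  proof -
    obtain n where "x < real n * \<delta>" using reals_Archimedean3[OF \<delta>(1)] by blast
    then show ?thesis using all[of x n] that by simp
  qed
  show ?thesis
  proof (cases "t = 0")
    case True then show ?thesis by (simp add: h0)
  next
    case False
    then have t0: "0 < t" using assms by simp
    have "(J has_vector_derivative hh t) (at t within {0..t+1})"
      unfolding J_def[abs_def]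
      by (rule integral_has_vector_derivative) (use t0 in \<open>auto intro: continuous_on_subset[OF hh_cont]\<close>)
    then have d1: "(J has_vector_derivative hh t) (at t)"
      using at_within_Icc_at[of 0 t "t+1"] t0 by simp
    have d2: "((\<lambda>_. 0) has_vector_derivative hh t) (at t)"
      by (rule has_vector_derivative_transform_within_open[OF d1, of "{0<..}"]) (use t0 Jz in auto)
    have "hh t = 0"
      by (rule vector_derivative_unique_at[OF d2]) (rule has_vector_derivative_const)
    then show ?thesis using hh_pos t0 by simp
  qed
qed

end


theorem mainTheorem7:
  fixes \<Phi> :: "real \<Rightarrow> real" and \<nu> :: "real measure" and u :: "real \<Rightarrow> real"
    and F :: "'a::banach \<Rightarrow> 'a" and \<xi> f0 :: 'a and f g :: "real \<Rightarrow> 'a"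
  assumes "standing_assumption \<Phi> \<nu> u"
    and "absolutely_continuous lborel \<nu>"
    and "bounded_linear F"
    and "caputo_solution \<nu> F \<xi> f0 f"
    and "caputo_solution \<nu> F \<xi> f0 g"
  shows "\<forall>t\<ge>0. f t = g t"
proof -
  have KN: "kern \<nu>" using assms(1) unfolding standing_assumption_def kern_def by auto
  interpret kern \<nu> by (rule KN)
  have Fl: "bounded_linear F" by (rule assms(3))
  have cf: "continuous_on {0..} f" and f0: "f 0 = f0"
    and df: "\<And>t. t > 0 \<Longrightarrow> ((\<lambda>\<tau>. integral {0..\<tau>} (\<lambda>s. k (\<tau> - s) *\<^sub>R (f s - f 0))) has_vector_derivative (\<xi> + F (f t))) (at t)"
    using assms(4) unfolding caputo_solution_def by auto
  have cg: "continuous_on {0..} g" and g0: "g 0 = f0"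
    and dg: "\<And>t. t > 0 \<Longrightarrow> ((\<lambda>\<tau>. integral {0..\<tau>} (\<lambda>s. k (\<tau> - s) *\<^sub>R (g s - g 0))) has_vector_derivative (\<xi> + F (g t))) (at t)"
    using assms(5) unfolding caputo_solution_def by auto
  define h where "h = (\<lambda>s. f s - g s)"
  have eq: "integral {0..\<tau>} (\<lambda>s. k (\<tau> - s) *\<^sub>R h s)
      = integral {0..\<tau>} (\<lambda>s. k (\<tau> - s) *\<^sub>R (f s - f 0)) - integral {0..\<tau>} (\<lambda>s. k (\<tau> - s) *\<^sub>R (g s - g 0))" for \<tau>
  proof -
    have "integral {0..\<tau>} (\<lambda>s. k (\<tau> - s) *\<^sub>R (f s - f 0)) - integral {0..\<tau>} (\<lambda>s. k (\<tau> - s) *\<^sub>R (g s - g 0))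
        = integral {0..\<tau>} (\<lambda>s. k (\<tau> - s) *\<^sub>R (f s - f 0) - k (\<tau> - s) *\<^sub>R (g s - g 0))"
      by (rule integral_diff[symmetric]; rule conv_int;
          auto intro!: continuous_intros intro: continuous_on_subset[OF cf] continuous_on_subset[OF cg])
    also have "\<dots> = integral {0..\<tau>} (\<lambda>s. k (\<tau> - s) *\<^sub>R h s)"
      by (rule integral_cong) (simp add: h_def f0 g0 algebra_simps)
    finally show ?thesis by simp
  qed
  interpret core \<nu> F h
  proof (rule core.intro[OF KN], rule core_axioms.intro)
    show "bounded_linear F" by (rule Fl)
    show "continuous_on {0..} h" unfolding h_def by (intro continuous_intros cf cg)
    show "h 0 = 0" by (simp add: h_def f0 g0)
    fix t :: real assume t: "t > 0"
    have "((\<lambda>\<tau>. integral {0..\<tau>} (\<lambda>s. k (\<tau> - s) *\<^sub>R (f s - f 0)) - integral {0..\<tau>} (\<lambda>s. k (\<tau> - s) *\<^sub>R (g s - g 0)))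
        has_vector_derivative (\<xi> + F (f t)) - (\<xi> + F (g t))) (at t)"
      by (rule has_vector_derivative_diff[OF df[OF t] dg[OF t]])
    moreover have "(\<xi> + F (f t)) - (\<xi> + F (g t)) = F (h t)"
      unfolding h_def using linear_diff[OF bounded_linear.linear[OF Fl]] by simp
    ultimately show "((\<lambda>\<tau>. integral {0..\<tau>} (\<lambda>s. k (\<tau> - s) *\<^sub>R h s)) has_vector_derivative F (h t)) (at t)"
      unfolding eq by simp
  qed
  show ?thesis
  proof (intro allI impI)
    fix t :: real assume "0 \<le> t"
    then have "h t = 0" by (rule core_result)
    then show "f t = g t" by (simp add: h_def)
  qed
qed


end
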